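(* Let $\gamma=(\gamma_1,\dots,\gamma_b)$ be a parallel map on $V=V_1\oplus\cdots\oplus V_b$, $V_i\cong(\mathbb F_2)^m$, with $0\gamma=0$. Let $U,U'$ be subspaces of $V$ of dimension $n-1$ with $J_U\cap J_{U'}=\emptyset$. Suppose that for every $i\notin J_U\cup J_{U'}$, $\gamma_i$ is differentially $2^r$-uniform with $r<m$ and strongly $(r-1)$-anti-invariant, and for every $j\in J_U\cup J_{U'}$, $\gamma_j$ is differentially $2^r$-uniform with $r<m-1$ and strongly $r$-anti-invariant. If $\gamma$ maps $\mathcal{LA}_U(W_1|W_2)$ onto a non-trivial partition $\mathcal{LA}_{U'}(W_1'|W_2')$, then $W_1,W_1',W_2,W_2'$ are walls and $W_1=W_1'=W_2=W_2'$; in particular both partitions are linear.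
   Context: Let $m,b>1$, $n=mb$, $V=(\mathbb F_2)^n=V_1\oplus\cdots\oplus V_b$, $V_i\cong(\mathbb F_2)^m$. Permutations act on the right. A parallel map is $\gamma\in\mathrm{Sym}(V)$ with $(v_1\oplus\cdots\oplus v_b)\gamma=v_1\gamma_1\oplus\cdots\oplus v_b\gamma_b$, $\gamma_i\in\mathrm{Sym}(V_i)$. A wall is $\bigoplus_{i\in I}V_i$ with $\emptyset\ne I\subsetneq\{1,\dots,b\}$. $J_U=\{j:V_j\cap U\subsetneq V_j\}$. $f:(\mathbb F_2)^m\to(\mathbb F_2)^m$ is differentially $\delta$-uniform if $\delta=\max_{a\ne0,b}|\{x:f(x+a)+f(x)=b\}|$; for $f(0)=0$, $f$ is strongly $s$-anti-invariant if for all subspaces $A,B$ with $f(A)=B$, either $\dim A=\dim B<m-s$ or $A=B=(\mathbb F_2)^m$. A permutation maps $\mathcal A$ onto $\mathcal B$ if it sends the blocks of $\mathcal A$ exactly onto those of $\mathcal B$; trivial partitions are the singleton partition and $\{V\}$. $\mathcal L(W)=\{W+v:v\in V\}$. For subspaces $W_1,W_2\subseteq U$, $\mathcal{LA}_U(W_1|W_2)=\{W_1+v:v\in U\}\cup\{(W_2+\bar v)+v:v\in U\}$ for any $\bar v\in V\setminus U$. *)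

theory Defs
  imports Main
begin

text \<open>A vector over F_2 with coordinates in I is a function to bool (True = 1)
  vanishing outside I. Addition is coordinatewise xor.\<close>

definition vecs :: "'a set \<Rightarrow> ('a \<Rightarrow> bool) set" where
  "vecs I = {x. \<forall>k. k \<notin> I \<longrightarrow> \<not> x k}"

definition vzero :: "'a \<Rightarrow> bool" where
  "vzero = (\<lambda>_. False)"

definition vadd :: "('a \<Rightarrow> bool) \<Rightarrow> ('a \<Rightarrow> bool) \<Rightarrow> ('a \<Rightarrow> bool)" where
  "vadd x y = (\<lambda>k. x k \<noteq> y k)"

definition f2_subspace :: "'a set \<Rightarrow> ('a \<Rightarrow> bool) set \<Rightarrow> bool" where
  "f2_subspace I U \<longleftrightarrow> U \<subseteq> vecs I \<and> vzero \<in> U \<and> (\<forall>x\<in>U. \<forall>y\<in>U. vadd x y \<in> U)"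

definition f2_span :: "('a \<Rightarrow> bool) set \<Rightarrow> ('a \<Rightarrow> bool) set" where
  "f2_span S = \<Inter> {W. vzero \<in> W \<and> (\<forall>x\<in>W. \<forall>y\<in>W. vadd x y \<in> W) \<and> S \<subseteq> W}"

definition f2_dim :: "('a \<Rightarrow> bool) set \<Rightarrow> nat" where
  "f2_dim U = (LEAST k. \<exists>B. finite B \<and> B \<subseteq> U \<and> card B = k \<and> f2_span B = U)"

definition coset :: "('a \<Rightarrow> bool) set \<Rightarrow> ('a \<Rightarrow> bool) \<Rightarrow> ('a \<Rightarrow> bool) set" where
  "coset W v = (\<lambda>w. vadd w v) ` W"

text \<open>V = (F_2)^n with n = m*b, coordinates (i,j), block i < b, position j < m.
  The blocks are indexed 0..b-1.\<close>

abbreviation VV :: "nat \<Rightarrow> nat \<Rightarrow> (nat \<times> nat \<Rightarrow> bool) set" where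
  "VV m b \<equiv> vecs ({..<b} \<times> {..<m})"

abbreviation blockV :: "nat \<Rightarrow> nat \<Rightarrow> (nat \<times> nat \<Rightarrow> bool) set" where
  "blockV m i \<equiv> vecs ({i} \<times> {..<m})"

definition comp :: "nat \<Rightarrow> (nat \<times> nat \<Rightarrow> bool) \<Rightarrow> nat \<Rightarrow> (nat \<Rightarrow> bool)" where
  "comp m x i = (\<lambda>j. j < m \<and> x (i, j))"

definition par_map :: "nat \<Rightarrow> nat \<Rightarrow> (nat \<Rightarrow> (nat \<Rightarrow> bool) \<Rightarrow> (nat \<Rightarrow> bool))
    \<Rightarrow> (nat \<times> nat \<Rightarrow> bool) \<Rightarrow> (nat \<times> nat \<Rightarrow> bool)" where
  "par_map m b g x = (\<lambda>(i, j). i < b \<and> j < m \<and> g i (comp m x i) j)"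

definition is_wall :: "nat \<Rightarrow> nat \<Rightarrow> (nat \<times> nat \<Rightarrow> bool) set \<Rightarrow> bool" where
  "is_wall m b W \<longleftrightarrow> (\<exists>I. I \<noteq> {} \<and> I \<subset> {..<b} \<and> W = vecs (I \<times> {..<m}))"

definition J_set :: "nat \<Rightarrow> nat \<Rightarrow> (nat \<times> nat \<Rightarrow> bool) set \<Rightarrow> nat set" where
  "J_set m b U = {j. j < b \<and> blockV m j \<inter> U \<subset> blockV m j}"

definition diff_unif :: "nat \<Rightarrow> ((nat \<Rightarrow> bool) \<Rightarrow> (nat \<Rightarrow> bool)) \<Rightarrow> nat" where
  "diff_unif m f = Max {card {x \<in> vecs {..<m}. vadd (f (vadd x a)) (f x) = c} | a c.
      a \<in> vecs {..<m} \<and> a \<noteq> vzero \<and> c \<in> vecs {..<m}}"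

definition diff_uniform :: "nat \<Rightarrow> ((nat \<Rightarrow> bool) \<Rightarrow> (nat \<Rightarrow> bool)) \<Rightarrow> nat \<Rightarrow> bool" where
  "diff_uniform m f \<delta> \<longleftrightarrow> diff_unif m f = \<delta>"

definition strongly_anti_invariant :: "nat \<Rightarrow> ((nat \<Rightarrow> bool) \<Rightarrow> (nat \<Rightarrow> bool)) \<Rightarrow> nat \<Rightarrow> bool" where
  "strongly_anti_invariant m f s \<longleftrightarrow>
     (\<forall>A B. f2_subspace {..<m} A \<longrightarrow> f2_subspace {..<m} B \<longrightarrow> f ` A = B \<longrightarrow>
        (f2_dim A = f2_dim B \<and> f2_dim B < m - s) \<or> (A = vecs {..<m} \<and> B = vecs {..<m}))"

definition maps_onto :: "('x \<Rightarrow> 'x) \<Rightarrow> 'x set set \<Rightarrow> 'x set set \<Rightarrow> bool" where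
  "maps_onto f \<A> \<B> \<longleftrightarrow> (\<lambda>A. f ` A) ` \<A> = \<B>"

definition trivial_partition :: "'x set \<Rightarrow> 'x set set \<Rightarrow> bool" where
  "trivial_partition S P \<longleftrightarrow> P = {{x} | x. x \<in> S} \<or> P = {S}"

definition lin_part :: "nat \<Rightarrow> nat \<Rightarrow> (nat \<times> nat \<Rightarrow> bool) set \<Rightarrow> (nat \<times> nat \<Rightarrow> bool) set set" where
  "lin_part m b W = {coset W v | v. v \<in> VV m b}"

definition LA :: "nat \<Rightarrow> nat \<Rightarrow> (nat \<times> nat \<Rightarrow> bool) set \<Rightarrow> (nat \<times> nat \<Rightarrow> bool) set
    \<Rightarrow> (nat \<times> nat \<Rightarrow> bool) set \<Rightarrow> (nat \<times> nat \<Rightarrow> bool) set set" where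
  "LA m b U W1 W2 = (let vb = (SOME vb. vb \<in> VV m b - U) in
     {coset W1 v | v. v \<in> U} \<union> {coset (coset W2 vb) v | v. v \<in> U})"

end

theory Submission
  imports Defs
begin

lemma vadd_comm: "vadd x y = vadd y x" unfolding vadd_def by auto
lemma vadd_assoc: "vadd (vadd x y) z = vadd x (vadd y z)" unfolding vadd_def by auto
lemma vadd_self[simp]: "vadd x x = vzero" unfolding vadd_def vzero_def by auto
lemma vadd_zero[simp]: "vadd x vzero = x" "vadd vzero x = x" unfolding vadd_def vzero_def by auto
lemma vadd_cancel[simp]: "vadd (vadd x y) y = x" "vadd x (vadd x y) = y" "vadd (vadd x y) x = y" "vadd y (vadd x y) = x"
  unfolding vadd_def by auto
lemma vadd_eq_iff: "vadd x y = z \<longleftrightarrow> x = vadd z y" unfolding vadd_def by (auto simp: fun_eq_iff)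
lemma vadd_eq_zero_iff: "vadd x y = vzero \<longleftrightarrow> x = y" unfolding vadd_def vzero_def by (auto simp: fun_eq_iff)
lemma vecs_vadd: "x \<in> vecs I \<Longrightarrow> y \<in> vecs I \<Longrightarrow> vadd x y \<in> vecs I"
  unfolding vecs_def vadd_def by auto
lemma vecs_zero[simp]: "vzero \<in> vecs I" unfolding vecs_def vzero_def by auto
lemma vecs_mono: "I \<subseteq> J \<Longrightarrow> vecs I \<subseteq> vecs J" unfolding vecs_def by auto

lemma card_vecs: assumes "finite I" shows "finite (vecs I)" "card (vecs I) = 2 ^ card I"
proof -
  have b: "bij_betw (\<lambda>x. {k. x k}) (vecs I) (Pow I)"
    unfolding bij_betw_def inj_on_def vecs_def
  proof (intro conjI ballI impI)
    fix x y :: "'a \<Rightarrow> bool" assume "{k. x k} = {k. y k}" then show "x = y" by (auto simp: fun_eq_iff)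
  next
    show "(\<lambda>x. {k. x k}) ` {x. \<forall>k. k \<notin> I \<longrightarrow> \<not> x k} = Pow I"
    proof
      show "Pow I \<subseteq> (\<lambda>x. {k. x k}) ` {x. \<forall>k. k \<notin> I \<longrightarrow> \<not> x k}"
      proof
        fix S assume "S \<in> Pow I"
        then show "S \<in> (\<lambda>x. {k. x k}) ` {x. \<forall>k. k \<notin> I \<longrightarrow> \<not> x k}"
          by (intro image_eqI[of _ _ "\<lambda>k. k \<in> S"]) auto
      qed
    qed auto
  qed
  show "finite (vecs I)" using bij_betw_finite[OF b] assms by simp
  show "card (vecs I) = 2 ^ card I" using bij_betw_same_card[OF b] card_Pow[OF assms] by simp
qed

lemma coset_mem: "y \<in> coset W v \<longleftrightarrow> vadd y v \<in> W"
  unfolding coset_def by (auto simp: image_iff) (metis vadd_cancel(1))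

lemma coset_zero[simp]: "coset W vzero = W" unfolding coset_def by simp

lemma card_coset: "card (coset W v) = card W"
  unfolding coset_def by (rule card_image) (auto simp: inj_on_def vadd_eq_iff)

lemma finite_coset: "finite W \<Longrightarrow> finite (coset W v)" unfolding coset_def by simp

lemma coset_coset: "coset (coset W u) v = coset W (vadd u v)"
  by (auto simp: coset_mem vadd_assoc) (metis vadd_comm)+

lemma coset_inj: "coset A v = coset B v \<Longrightarrow> A = B"
  by (metis coset_coset vadd_self coset_zero)

lemma subspace_closed: "f2_subspace I U \<Longrightarrow> x \<in> U \<Longrightarrow> y \<in> U \<Longrightarrow> vadd x y \<in> U"
  unfolding f2_subspace_def by blast

lemma coset_self: "f2_subspace I W \<Longrightarrow> v \<in> coset W v"
  unfolding f2_subspace_def by (simp add: coset_mem)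

lemma coset_eq: assumes "f2_subspace I W" "y \<in> coset W v" shows "coset W y = coset W v"
proof -
  have h: "vadd y v \<in> W" using assms(2) coset_mem by blast
  show ?thesis
  proof (auto simp: coset_mem)
    fix z assume "vadd z y \<in> W"
    then have "vadd (vadd z y) (vadd y v) \<in> W" using subspace_closed[OF assms(1)] h by blast
    then show "vadd z v \<in> W" by (simp add: vadd_assoc)
  next
    fix z assume "vadd z v \<in> W"
    then have "vadd (vadd z v) (vadd y v) \<in> W" using subspace_closed[OF assms(1)] h by blast
    then show "vadd z y \<in> W" by (metis vadd_assoc vadd_cancel(4) vadd_comm)
  qed
qed

lemma coset_subset: assumes "f2_subspace I W" "W \<subseteq> U" "f2_subspace I U" "v \<in> U"
  shows "coset W v \<subseteq> U"
proof
  fix y assume "y \<in> coset W v"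
  then have "vadd y v \<in> U" using assms coset_mem by blast
  then have "vadd (vadd y v) v \<in> U" using subspace_closed[OF assms(3)] assms(4) by blast
  then show "y \<in> U" by simp
qed

lemma span_zero: "vzero \<in> f2_span S" unfolding f2_span_def by auto
lemma span_add: "x \<in> f2_span S \<Longrightarrow> y \<in> f2_span S \<Longrightarrow> vadd x y \<in> f2_span S"
  unfolding f2_span_def by auto
lemma span_sup: "S \<subseteq> f2_span S" unfolding f2_span_def by auto
lemma span_min: "vzero \<in> W \<Longrightarrow> (\<forall>x\<in>W. \<forall>y\<in>W. vadd x y \<in> W) \<Longrightarrow> S \<subseteq> W \<Longrightarrow> f2_span S \<subseteq> W"
  unfolding f2_span_def by auto
lemma span_empty: "f2_span {} = {vzero}"
proof
  show "f2_span {} \<subseteq> {vzero}" by (rule span_min) auto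
qed (simp add: span_zero)

lemma span_insert: "f2_span (insert x S) = f2_span S \<union> coset (f2_span S) x"
proof
  show "f2_span (insert x S) \<subseteq> f2_span S \<union> coset (f2_span S) x"
  proof (rule span_min)
    show "vzero \<in> f2_span S \<union> coset (f2_span S) x" using span_zero by blast
    show "insert x S \<subseteq> f2_span S \<union> coset (f2_span S) x"
      using span_sup span_zero by (auto simp: coset_mem)
    show "\<forall>u\<in>f2_span S \<union> coset (f2_span S) x. \<forall>v\<in>f2_span S \<union> coset (f2_span S) x.
       vadd u v \<in> f2_span S \<union> coset (f2_span S) x"
    proof (intro ballI)
      fix u v assume u: "u \<in> f2_span S \<union> coset (f2_span S) x" and v: "v \<in> f2_span S \<union> coset (f2_span S) x"
      show "vadd u v \<in> f2_span S \<union> coset (f2_span S) x"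
      proof (cases "u \<in> f2_span S")
        case True
        show ?thesis
        proof (cases "v \<in> f2_span S")
          case True then show ?thesis using \<open>u \<in> f2_span S\<close> span_add by blast
        next
          case False
          then have "vadd v x \<in> f2_span S" using v coset_mem by blast
          then have "vadd u (vadd v x) \<in> f2_span S" using True span_add by blast
          then show ?thesis by (simp add: coset_mem vadd_assoc)
        qed
      next
        case False
        then have ux: "vadd u x \<in> f2_span S" using u coset_mem by blast
        show ?thesis
        proof (cases "v \<in> f2_span S")
          case True
          then have "vadd (vadd u x) v \<in> f2_span S" using ux span_add by blast
          then show ?thesis by (simp add: coset_mem vadd_assoc) (metis vadd_assoc vadd_comm)
        next
          case False
          then have "vadd v x \<in> f2_span S" using v coset_mem by blast
          then have "vadd (vadd u x) (vadd v x) \<in> f2_span S" using ux span_add by blast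
          then show ?thesis by (metis Un_iff vadd_assoc vadd_cancel(2) vadd_comm)
        qed
      qed
    qed
  qed
next
  have "f2_span S \<subseteq> f2_span (insert x S)"
    by (rule span_min) (use span_sup[of "insert x S"] in \<open>auto intro: span_zero span_add\<close>)
  moreover have "coset (f2_span S) x \<subseteq> f2_span (insert x S)"
  proof
    fix y assume "y \<in> coset (f2_span S) x"
    then have "vadd y x \<in> f2_span (insert x S)" using \<open>f2_span S \<subseteq> _\<close> coset_mem by blast
    moreover have "x \<in> f2_span (insert x S)" using span_sup by blast
    ultimately have "vadd (vadd y x) x \<in> f2_span (insert x S)" using span_add by blast
    then show "y \<in> f2_span (insert x S)" by simp
  qed
  ultimately show "f2_span S \<union> coset (f2_span S) x \<subseteq> f2_span (insert x S)" by blast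
qed

lemma span_finite_card: "finite S \<Longrightarrow> finite (f2_span S) \<and> card (f2_span S) \<le> 2 ^ card S"
proof (induction S rule: finite_induct)
  case empty then show ?case by (simp add: span_empty)
next
  case (insert x F)
  have "card (f2_span (insert x F)) \<le> card (f2_span F) + card (coset (f2_span F) x)"
    unfolding span_insert by (rule card_Un_le)
  then show ?case using insert by (simp add: span_insert card_coset finite_coset)
qed

lemma span_insert_card: assumes "finite (f2_span S)" "x \<notin> f2_span S"
  shows "card (f2_span (insert x S)) = 2 * card (f2_span S)"
proof -
  have "f2_span S \<inter> coset (f2_span S) x = {}"
  proof (rule ccontr)
    assume "f2_span S \<inter> coset (f2_span S) x \<noteq> {}"
    then obtain y where "y \<in> f2_span S" "vadd y x \<in> f2_span S" using coset_mem by blast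
    then have "vadd y (vadd y x) \<in> f2_span S" using span_add by blast
    then show False using assms(2) by simp
  qed
  then show ?thesis unfolding span_insert
    by (simp add: card_Un_disjoint assms finite_coset card_coset)
qed

lemma span_subspace: "f2_subspace I U \<Longrightarrow> S \<subseteq> U \<Longrightarrow> f2_span S \<subseteq> U"
  unfolding f2_subspace_def by (rule span_min) auto

lemma exists_basis:
  assumes U: "f2_subspace I U" "finite U"
  shows "\<exists>B. finite B \<and> B \<subseteq> U \<and> f2_span B = U \<and> card U = 2 ^ card B"
proof -
  have "\<And>S. finite S \<Longrightarrow> S \<subseteq> U \<Longrightarrow> card (f2_span S) = 2 ^ card S \<Longrightarrow> card U - card (f2_span S) = k
     \<Longrightarrow> \<exists>B. finite B \<and> B \<subseteq> U \<and> f2_span B = U \<and> card U = 2 ^ card B" for k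
  proof (induction k rule: less_induct)
    case (less k S)
    have sub: "f2_span S \<subseteq> U" using span_subspace[OF U(1) less(3)] .
    show ?case
    proof (cases "f2_span S = U")
      case True then show ?thesis using less(2,3,4) by (intro exI[of _ S]) simp
    next
      case False
      then obtain x where x: "x \<in> U" "x \<notin> f2_span S" using sub by blast
      have fin: "finite (f2_span S)" using U(2) sub finite_subset by blast
      have xS: "x \<notin> S" using x span_sup by blast
      have c: "card (f2_span (insert x S)) = 2 ^ card (insert x S)"
        using span_insert_card[OF fin x(2)] less(4) less(2) xS by simp
      have sub2: "f2_span (insert x S) \<subseteq> U" using span_subspace[OF U(1)] less(3) x by blast
      have "card (f2_span S) < card (f2_span (insert x S))"
        using span_insert_card[OF fin x(2)] less(4) by simp
      moreover have "card (f2_span (insert x S)) \<le> card U" using card_mono[OF U(2) sub2] .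
      ultimately have "card U - card (f2_span (insert x S)) < k" using less(5) by linarith
      moreover have "finite (insert x S)" using less(2) by simp
      moreover have "insert x S \<subseteq> U" using less(3) x by simp
      ultimately show ?thesis using less(1) c by blast
    qed
  qed
  from this[of "{}"] show ?thesis by (simp add: span_empty)
qed

lemma card_dim: assumes U: "f2_subspace I U" "finite U" shows "card U = 2 ^ f2_dim U"
proof -
  obtain B where B: "finite B" "B \<subseteq> U" "f2_span B = U" "card U = 2 ^ card B"
    using exists_basis[OF U] by blast
  have ex: "\<exists>B. finite B \<and> B \<subseteq> U \<and> card B = card B \<and> f2_span B = U" using B by blast
  have le: "f2_dim U \<le> card B" unfolding f2_dim_def by (rule Least_le) (use B in blast)
  obtain B0 where B0: "finite B0" "B0 \<subseteq> U" "card B0 = f2_dim U" "f2_span B0 = U"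
    unfolding f2_dim_def using LeastI_ex[of "\<lambda>k. \<exists>B. finite B \<and> B \<subseteq> U \<and> card B = k \<and> f2_span B = U"] ex by blast
  have "card U \<le> 2 ^ f2_dim U" using span_finite_card[OF B0(1)] B0 by simp
  moreover have "(2::nat) ^ f2_dim U \<le> 2 ^ card B" using le by simp
  ultimately show ?thesis using B(4) by simp
qed



lemma comp_in_vecs: "comp m x i \<in> vecs {..<m}" unfolding comp_def vecs_def by auto
lemma comp_vadd: "comp m (vadd x y) i = vadd (comp m x i) (comp m y i)"
  unfolding comp_def vadd_def by auto
lemma comp_zero[simp]: "comp m vzero i = vzero" unfolding comp_def vzero_def by auto

lemma VV_ext: assumes "x \<in> VV m b" "y \<in> VV m b" "\<forall>i<b. comp m x i = comp m y i" shows "x = y"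
proof (rule ext, clarify)
  fix i j
  show "x (i, j) = y (i, j)"
  proof (cases "i < b \<and> j < m")
    case True then show ?thesis using assms(3) unfolding comp_def by (metis (mono_tags))
  next
    case False then show ?thesis using assms(1,2) unfolding vecs_def by auto
  qed
qed

lemma blockV_iff: assumes "i < b"
  shows "x \<in> blockV m i \<longleftrightarrow> x \<in> VV m b \<and> (\<forall>j<b. j \<noteq> i \<longrightarrow> comp m x j = vzero)"
  using assms unfolding vecs_def comp_def vzero_def fun_eq_iff by auto

lemma blockV_sub: "i < b \<Longrightarrow> blockV m i \<subseteq> VV m b" by (rule vecs_mono) auto

lemma card_blockV: "finite (blockV m i)" "card (blockV m i) = 2 ^ m"
  using card_vecs[of "{i} \<times> {..<m}"] by (auto simp: card_cartesian_product)

lemma card_VV: "finite (VV m b)" "card (VV m b) = 2 ^ (m * b)"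
  using card_vecs[of "{..<b} \<times> {..<m}"] by (auto simp: card_cartesian_product mult.commute)

lemma comp_inj_block: "inj_on (\<lambda>x. comp m x i) (blockV m i)"
proof (rule inj_onI)
  fix x y assume xy: "x \<in> blockV m i" "y \<in> blockV m i" "comp m x i = comp m y i"
  show "x = y"
  proof (rule ext, clarify)
    fix k j show "x (k, j) = y (k, j)"
    proof (cases "k = i \<and> j < m")
      case True then show ?thesis using xy(3) unfolding comp_def by (metis (mono_tags))
    next
      case False then show ?thesis using xy(1,2) unfolding vecs_def by auto
    qed
  qed
qed

lemma comp_surj_block: "y \<in> vecs {..<m} \<Longrightarrow> \<exists>x\<in>blockV m i. comp m x i = y"
  by (rule bexI[of _ "\<lambda>(k,j). k = i \<and> j < m \<and> y j"]) (auto simp: comp_def vecs_def fun_eq_iff)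

lemma restr_sum:
  assumes W: "f2_subspace ({..<b} \<times> {..<m}) W" and x: "x \<in> VV m b"
    and h: "\<forall>i<b. (\<lambda>(k,j). k = i \<and> x (k,j)) \<in> W"
  shows "x \<in> W"
proof -
  have "\<And>n. n \<le> b \<Longrightarrow> (\<lambda>(k,j). k < n \<and> x (k,j)) \<in> W"
  proof -
    fix n show "n \<le> b \<Longrightarrow> (\<lambda>(k,j). k < n \<and> x (k,j)) \<in> W"
    proof (induction n)
      case 0
      have "(\<lambda>(k,j). k < (0::nat) \<and> x (k,j)) = vzero" by (auto simp: vzero_def)
      then show ?case using W unfolding f2_subspace_def by simp
    next
      case (Suc n)
      have "(\<lambda>(k,j). k < Suc n \<and> x (k,j)) = vadd (\<lambda>(k,j). k < n \<and> x (k,j)) (\<lambda>(k,j). k = n \<and> x (k,j))"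
        by (auto simp: vadd_def fun_eq_iff less_Suc_eq)
      then show ?case using Suc h subspace_closed[OF W] by simp
    qed
  qed
  from this[of b] have "(\<lambda>(k,j). k < b \<and> x (k,j)) \<in> W" by simp
  moreover have "(\<lambda>(k,j). k < b \<and> x (k,j)) = x" using x unfolding vecs_def by (auto simp: fun_eq_iff)
  ultimately show ?thesis by simp
qed

lemma restr_block: "i < b \<Longrightarrow> x \<in> VV m b \<Longrightarrow> (\<lambda>(k,j). k = i \<and> x (k,j)) \<in> blockV m i"
  unfolding vecs_def by auto

lemma wall_iff: assumes "I \<subseteq> {..<b}"
  shows "z \<in> vecs (I \<times> {..<m}) \<longleftrightarrow> z \<in> VV m b \<and> (\<forall>i<b. i \<notin> I \<longrightarrow> comp m z i = vzero)"
  using assms unfolding vecs_def comp_def vzero_def fun_eq_iff by auto blast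

locale pm =
  fixes m b :: nat and g :: "nat \<Rightarrow> (nat \<Rightarrow> bool) \<Rightarrow> (nat \<Rightarrow> bool)"
  assumes perm: "\<forall>i<b. bij_betw (g i) (vecs {..<m}) (vecs {..<m})"
    and zero: "par_map m b g vzero = vzero"
begin

abbreviation "\<gamma> \<equiv> par_map m b g"

lemma g_vecs: "i < b \<Longrightarrow> y \<in> vecs {..<m} \<Longrightarrow> g i y \<in> vecs {..<m}"
  using perm bij_betwE by blast

lemma g_inj: "i < b \<Longrightarrow> y \<in> vecs {..<m} \<Longrightarrow> z \<in> vecs {..<m} \<Longrightarrow> g i y = g i z \<Longrightarrow> y = z"
  using perm by (meson bij_betw_def inj_onD)

lemma comp_par: assumes "i < b" shows "comp m (\<gamma> x) i = g i (comp m x i)"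
proof -
  have "g i (comp m x i) \<in> vecs {..<m}" using g_vecs[OF assms comp_in_vecs] .
  then show ?thesis using assms unfolding comp_def par_map_def vecs_def by (auto simp: fun_eq_iff)
qed

lemma g0: assumes "i < b" shows "g i vzero = vzero"
proof -
  have "comp m (\<gamma> vzero) i = vzero" using zero by simp
  then show ?thesis using comp_par[OF assms, of vzero] by simp
qed

lemma par_VV: "\<gamma> x \<in> VV m b" unfolding par_map_def vecs_def by auto

lemma par_inj: "inj_on \<gamma> (VV m b)"
proof (rule inj_onI)
  fix x y assume h: "x \<in> VV m b" "y \<in> VV m b" "\<gamma> x = \<gamma> y"
  show "x = y"
  proof (rule VV_ext[OF h(1,2)], intro allI impI)
    fix i assume i: "i < b"
    have "g i (comp m x i) = g i (comp m y i)" using comp_par[OF i] h(3) by metis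
    then show "comp m x i = comp m y i" using g_inj[OF i comp_in_vecs comp_in_vecs] by blast
  qed
qed

lemma par_surj: "\<gamma> ` VV m b = VV m b"
  using endo_inj_surj[OF card_VV(1) _ par_inj] par_VV by blast

lemma par_block_sub: assumes "i < b" shows "\<gamma> ` blockV m i \<subseteq> blockV m i"
proof
  fix y assume "y \<in> \<gamma> ` blockV m i"
  then obtain x where x: "x \<in> blockV m i" "y = \<gamma> x" by blast
  show "y \<in> blockV m i" unfolding blockV_iff[OF assms]
    using x blockV_iff[OF assms] par_VV comp_par g0 by auto
qed

lemma par_block: assumes "i < b" shows "\<gamma> ` blockV m i = blockV m i"
  using endo_inj_surj[OF card_blockV(1) par_block_sub[OF assms]]
    inj_on_subset[OF par_inj blockV_sub[OF assms]] by blast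

lemma wall_coset_iff: assumes "I \<subseteq> {..<b}" "x \<in> VV m b"
  shows "y \<in> coset (vecs (I \<times> {..<m})) x \<longleftrightarrow> y \<in> VV m b \<and> (\<forall>i<b. i \<notin> I \<longrightarrow> comp m y i = comp m x i)"
proof -
  have "y \<in> coset (vecs (I \<times> {..<m})) x \<longleftrightarrow> vadd y x \<in> vecs (I \<times> {..<m})" by (rule coset_mem)
  also have "\<dots> \<longleftrightarrow> vadd y x \<in> VV m b \<and> (\<forall>i<b. i \<notin> I \<longrightarrow> comp m (vadd y x) i = vzero)"
    by (rule wall_iff[OF assms(1)])
  also have "\<dots> \<longleftrightarrow> y \<in> VV m b \<and> (\<forall>i<b. i \<notin> I \<longrightarrow> comp m y i = comp m x i)"
  proof -
    have "vadd y x \<in> VV m b \<longleftrightarrow> y \<in> VV m b"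
      using vecs_vadd assms(2) by (metis vadd_cancel(1))
    then show ?thesis by (simp add: comp_vadd vadd_eq_zero_iff)
  qed
  finally show ?thesis .
qed

lemma wall_coset: assumes "I \<subseteq> {..<b}" "x \<in> VV m b"
  shows "\<gamma> ` coset (vecs (I \<times> {..<m})) x = coset (vecs (I \<times> {..<m})) (\<gamma> x)"
proof
  show "\<gamma> ` coset (vecs (I \<times> {..<m})) x \<subseteq> coset (vecs (I \<times> {..<m})) (\<gamma> x)"
    using wall_coset_iff[OF assms(1)] assms(2) par_VV comp_par by auto
next
  show "coset (vecs (I \<times> {..<m})) (\<gamma> x) \<subseteq> \<gamma> ` coset (vecs (I \<times> {..<m})) x"
  proof
    fix z assume z: "z \<in> coset (vecs (I \<times> {..<m})) (\<gamma> x)"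
    then have zV: "z \<in> VV m b" and zc: "\<forall>i<b. i \<notin> I \<longrightarrow> comp m z i = comp m (\<gamma> x) i"
      using wall_coset_iff[OF assms(1) par_VV] by auto
    obtain y where y: "y \<in> VV m b" "z = \<gamma> y" using zV par_surj by blast
    have "\<forall>i<b. i \<notin> I \<longrightarrow> comp m y i = comp m x i"
    proof (intro allI impI)
      fix i assume "i < b" "i \<notin> I"
      then have "g i (comp m y i) = g i (comp m x i)" using zc y comp_par by metis
      then show "comp m y i = comp m x i" using g_inj[OF \<open>i < b\<close> comp_in_vecs comp_in_vecs] by blast
    qed
    then show "z \<in> \<gamma> ` coset (vecs (I \<times> {..<m})) x" using y wall_coset_iff[OF assms] by blast
  qed
qed

end


lemma hyper:
  assumes U: "f2_subspace ({..<b} \<times> {..<m}) U" "f2_dim U = m * b - 1" and mb: "m * b \<ge> 1"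
  shows "card U = 2 ^ (m * b - 1)" "\<exists>vb. vb \<in> VV m b \<and> vb \<notin> U"
    "\<forall>x\<in>VV m b - U. \<forall>y\<in>VV m b - U. vadd x y \<in> U"
proof -
  have sub: "U \<subseteq> VV m b" using U(1) unfolding f2_subspace_def by blast
  have fin: "finite U" using finite_subset[OF sub card_VV(1)] .
  show c: "card U = 2 ^ (m * b - 1)" using card_dim[OF U(1) fin] U(2) by simp
  have "(2::nat) ^ (m * b - 1) < 2 ^ (m * b)" using mb by (intro power_strict_increasing) auto
  then have "card U < card (VV m b)" using c card_VV(2) by simp
  then have "\<not> VV m b \<subseteq> U" using card_mono[OF fin] by (meson not_le)
  then obtain vb where vb: "vb \<in> VV m b" "vb \<notin> U" by blast
  then show "\<exists>vb. vb \<in> VV m b \<and> vb \<notin> U" by blast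
  have disj: "U \<inter> coset U vb = {}"
  proof (rule ccontr)
    assume "U \<inter> coset U vb \<noteq> {}"
    then obtain y where "y \<in> U" "vadd y vb \<in> U" using coset_mem by blast
    then have "vadd y (vadd y vb) \<in> U" using subspace_closed[OF U(1)] by blast
    then show False using vb by simp
  qed
  have csub: "coset U vb \<subseteq> VV m b"
  proof
    fix y assume "y \<in> coset U vb"
    then have "vadd y vb \<in> VV m b" using coset_mem sub by blast
    then have "vadd (vadd y vb) vb \<in> VV m b" using vecs_vadd vb(1) by blast
    then show "y \<in> VV m b" by simp
  qed
  have p: "(2::nat) ^ (m * b - 1) + 2 ^ (m * b - 1) = 2 ^ (m * b)"
    using mb by (metis Suc_diff_1 le_numeral_extra(2) less_le_trans mult_2 power_Suc zero_less_one)
  have "card (U \<union> coset U vb) = card U + card (coset U vb)"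
    by (rule card_Un_disjoint[OF fin finite_coset[OF fin] disj])
  also have "\<dots> = card (VV m b)" using card_coset[of U vb] c card_VV(2)[where m=m and b=b] p by simp
  finally have "card (U \<union> coset U vb) = card (VV m b)" .
  moreover have "U \<union> coset U vb \<subseteq> VV m b" using sub csub by blast
  ultimately have eq: "U \<union> coset U vb = VV m b"
    using card_subset_eq[OF card_VV(1)[where m=m and b=b]] by blast
  show "\<forall>x\<in>VV m b - U. \<forall>y\<in>VV m b - U. vadd x y \<in> U"
  proof (intro ballI)
    fix x y assume x: "x \<in> VV m b - U" and y: "y \<in> VV m b - U"
    then have "vadd x vb \<in> U" "vadd y vb \<in> U" using eq coset_mem by blast+
    then have "vadd (vadd x vb) (vadd y vb) \<in> U" using subspace_closed[OF U(1)] by blast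
    moreover have "vadd (vadd x vb) (vadd y vb) = vadd x y" unfolding vadd_def by auto
    ultimately show "vadd x y \<in> U" by simp
  qed
qed

lemma half_block:
  assumes U: "f2_subspace ({..<b} \<times> {..<m}) U" and H: "\<forall>x\<in>VV m b - U. \<forall>y\<in>VV m b - U. vadd x y \<in> U"
    and i: "i < b" and nb: "\<not> blockV m i \<subseteq> U"
  shows "2 ^ m \<le> 2 * card (blockV m i \<inter> U)"
proof -
  obtain e where e: "e \<in> blockV m i" "e \<notin> U" using nb by blast
  have eV: "e \<in> VV m b" using e blockV_sub[OF i] by blast
  have "blockV m i \<subseteq> (blockV m i \<inter> U) \<union> coset (blockV m i \<inter> U) e"
  proof
    fix y assume y: "y \<in> blockV m i"
    show "y \<in> (blockV m i \<inter> U) \<union> coset (blockV m i \<inter> U) e"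
    proof (cases "y \<in> U")
      case False
      then have "vadd y e \<in> U" using H y e eV blockV_sub[OF i] by blast
      moreover have "vadd y e \<in> blockV m i" using vecs_vadd y e by blast
      ultimately show ?thesis by (simp add: coset_mem)
    qed (use y in blast)
  qed
  then have "card (blockV m i) \<le> card ((blockV m i \<inter> U) \<union> coset (blockV m i \<inter> U) e)"
    by (rule card_mono[rotated]) (simp add: card_blockV finite_coset)
  also have "\<dots> \<le> card (blockV m i \<inter> U) + card (coset (blockV m i \<inter> U) e)" by (rule card_Un_le)
  finally have "2 ^ m \<le> card (blockV m i \<inter> U) + card (coset (blockV m i \<inter> U) e)" using card_blockV by simp
  then show ?thesis using card_coset[of "blockV m i \<inter> U" e] by simp
qed

lemma count_fibers:
  assumes "finite X" "\<forall>x\<in>X. f x \<in> Y" "finite Y" "\<forall>c\<in>Y. card {x\<in>X. f x = c} \<le> d"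
  shows "card X \<le> d * card Y"
proof -
  have "X = (\<Union>c\<in>Y. {x\<in>X. f x = c})" using assms(2) by blast
  then have "card X \<le> (\<Sum>c\<in>Y. card {x\<in>X. f x = c})" using card_UN_le[OF assms(3)] by metis
  also have "\<dots> \<le> (\<Sum>c\<in>Y. d)" by (rule sum_mono) (use assms(4) in blast)
  finally show ?thesis by (simp add: mult.commute)
qed

lemma du_bound:
  assumes "a \<in> vecs {..<m}" "a \<noteq> vzero" "c \<in> vecs {..<m}"
  shows "card {x \<in> vecs {..<m}. vadd (f (vadd x a)) (f x) = c} \<le> diff_unif m f"
proof -
  let ?S = "{card {x \<in> vecs {..<m}. vadd (f (vadd x a)) (f x) = c} | a c.
      a \<in> vecs {..<m} \<and> a \<noteq> vzero \<and> c \<in> vecs {..<m}}"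
  have "?S \<subseteq> {..card (vecs {..<m} :: (nat \<Rightarrow> bool) set)}"
    using card_vecs(1)[of "{..<m}"] by (auto intro!: card_mono)
  then have "finite ?S" using finite_subset by blast
  moreover have "card {x \<in> vecs {..<m}. vadd (f (vadd x a)) (f x) = c} \<in> ?S" using assms by blast
  ultimately show ?thesis unfolding diff_unif_def by (rule Max_ge)
qed

context pm begin

lemma comp_D: assumes "j < b"
  shows "comp m (vadd (\<gamma> (vadd x a)) (\<gamma> x)) j = vadd (g j (vadd (comp m x j) (comp m a j))) (g j (comp m x j))"
  using comp_par[OF assms] comp_vadd by simp

lemma D_nonzero: assumes "i < b" "comp m a i \<noteq> vzero"
  shows "comp m (vadd (\<gamma> (vadd x a)) (\<gamma> x)) i \<noteq> vzero"
proof
  assume h: "comp m (vadd (\<gamma> (vadd x a)) (\<gamma> x)) i = vzero"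
  have "vadd (g i (vadd (comp m x i) (comp m a i))) (g i (comp m x i)) = vzero"
    using h comp_D[OF assms(1), of x a] by simp
  then have "g i (vadd (comp m x i) (comp m a i)) = g i (comp m x i)"
    by (simp only: vadd_eq_zero_iff)
  moreover have "vadd (comp m x i) (comp m a i) \<in> vecs {..<m}" by (intro vecs_vadd comp_in_vecs)
  ultimately have e: "vadd (comp m x i) (comp m a i) = comp m x i"
    using g_inj[OF assms(1) _ comp_in_vecs] by blast
  have "comp m a i = vadd (comp m x i) (vadd (comp m x i) (comp m a i))" by simp
  also have "\<dots> = vzero" by (simp only: e vadd_self)
  finally show False using assms(2) by simp
qed

lemma fiber_bound:
  assumes i: "i < b" and a: "comp m a i \<noteq> vzero" and X: "X \<subseteq> blockV m i"
  shows "card {x\<in>X. comp m (vadd (\<gamma> (vadd x a)) (\<gamma> x)) i = c} \<le> diff_unif m (g i)"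
proof (cases "c \<in> vecs {..<m}")
  case False
  have e: "{x\<in>X. comp m (vadd (\<gamma> (vadd x a)) (\<gamma> x)) i = c} = {}"
  proof (rule equals0I)
    fix x assume "x \<in> {x\<in>X. comp m (vadd (\<gamma> (vadd x a)) (\<gamma> x)) i = c}"
    then have "comp m (vadd (\<gamma> (vadd x a)) (\<gamma> x)) i = c" by simp
    then show False using False comp_in_vecs[of m "vadd (\<gamma> (vadd x a)) (\<gamma> x)" i] by simp
  qed
  show ?thesis by (subst e) simp
next
  case True
  let ?F = "{x\<in>X. comp m (vadd (\<gamma> (vadd x a)) (\<gamma> x)) i = c}"
  let ?G = "{y \<in> vecs {..<m}. vadd (g i (vadd y (comp m a i))) (g i y) = c}"
  have "?F \<subseteq> blockV m i" using X by blast
  then have inj: "inj_on (\<lambda>x. comp m x i) ?F" by (rule inj_on_subset[OF comp_inj_block])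
  have sub: "(\<lambda>x. comp m x i) ` ?F \<subseteq> ?G"
  proof
    fix y assume "y \<in> (\<lambda>x. comp m x i) ` ?F"
    then obtain x where x: "x \<in> ?F" "y = comp m x i" by blast
    have "vadd (g i (vadd (comp m x i) (comp m a i))) (g i (comp m x i)) = c"
      using x(1) comp_D[OF i, of x a] by simp
    then show "y \<in> ?G" using x(2) comp_in_vecs[of m x i] by simp
  qed
  have "finite ?G" using card_vecs(1)[of "{..<m}"] by simp
  then have "card ?F \<le> card ?G" by (rule card_inj_on_le[OF inj sub])
  also have "\<dots> \<le> diff_unif m (g i)" by (rule du_bound[OF comp_in_vecs a True])
  finally show ?thesis .
qed

end


lemma sub_VV: "f2_subspace ({..<b} \<times> {..<m}) W \<Longrightarrow> W \<subseteq> VV m b"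
  unfolding f2_subspace_def by blast

lemma coset_sub_VV: assumes "f2_subspace ({..<b} \<times> {..<m}) W" "x \<in> VV m b"
  shows "coset W x \<subseteq> VV m b"
proof
  fix y assume "y \<in> coset W x"
  then have "vadd y x \<in> VV m b" using coset_mem sub_VV[OF assms(1)] by blast
  then have "vadd (vadd y x) x \<in> VV m b" using vecs_vadd assms(2) by blast
  then show "y \<in> VV m b" by simp
qed

lemma LA_blk:
  assumes U: "f2_subspace ({..<b} \<times> {..<m}) U"
    and H: "\<forall>x\<in>VV m b - U. \<forall>y\<in>VV m b - U. vadd x y \<in> U"
    and ex: "\<exists>vb. vb \<in> VV m b \<and> vb \<notin> U"
  shows "LA m b U W1 W2 = (\<lambda>x. if x \<in> U then coset W1 x else coset W2 x) ` VV m b"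
proof -
  define vb where "vb = (SOME vb. vb \<in> VV m b - U)"
  have vb: "vb \<in> VV m b" "vb \<notin> U" using someI_ex[of "\<lambda>vb. vb \<in> VV m b - U"] ex unfolding vb_def by blast+
  have Usub: "U \<subseteq> VV m b" by (rule sub_VV[OF U])
  have LA: "LA m b U W1 W2 = {coset W1 v | v. v \<in> U} \<union> {coset (coset W2 vb) v | v. v \<in> U}"
    unfolding LA_def Let_def vb_def by simp
  show ?thesis unfolding LA
  proof (intro equalityI subsetI)
    fix X assume "X \<in> {coset W1 v | v. v \<in> U} \<union> {coset (coset W2 vb) v | v. v \<in> U}"
    then show "X \<in> (\<lambda>x. if x \<in> U then coset W1 x else coset W2 x) ` VV m b"
    proof
      assume "X \<in> {coset W1 v | v. v \<in> U}"
      then obtain v where v: "v \<in> U" "X = coset W1 v" by blast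
      then show ?thesis using Usub by (intro image_eqI[of _ _ v]) auto
    next
      assume "X \<in> {coset (coset W2 vb) v | v. v \<in> U}"
      then obtain v where v: "v \<in> U" "X = coset (coset W2 vb) v" by blast
      have nU: "vadd vb v \<notin> U"
      proof
        assume "vadd vb v \<in> U"
        then have "vadd (vadd vb v) v \<in> U" using subspace_closed[OF U] v by blast
        then show False using vb by simp
      qed
      have inV: "vadd vb v \<in> VV m b" using vecs_vadd vb Usub v by blast
      show ?thesis using nU inV v by (intro image_eqI[of _ _ "vadd vb v"]) (auto simp: coset_coset)
    qed
  next
    fix X assume "X \<in> (\<lambda>x. if x \<in> U then coset W1 x else coset W2 x) ` VV m b"
    then obtain x where x: "x \<in> VV m b" "X = (if x \<in> U then coset W1 x else coset W2 x)" by blast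
    show "X \<in> {coset W1 v | v. v \<in> U} \<union> {coset (coset W2 vb) v | v. v \<in> U}"
    proof (cases "x \<in> U")
      case True then have "X = coset W1 x" using x by simp
      then show ?thesis using True by blast
    next
      case False
      then have "vadd vb x \<in> U" using H vb x by blast
      moreover have "coset (coset W2 vb) (vadd vb x) = coset W2 x" by (simp add: coset_coset)
      moreover have "X = coset W2 x" using x False by simp
      ultimately show ?thesis by blast
    qed
  qed
qed

lemma blk_unique:
  assumes U: "f2_subspace ({..<b} \<times> {..<m}) U"
    and W: "f2_subspace ({..<b} \<times> {..<m}) W1" "W1 \<subseteq> U" "f2_subspace ({..<b} \<times> {..<m}) W2" "W2 \<subseteq> U"
    and X: "X \<in> (\<lambda>x. if x \<in> U then coset W1 x else coset W2 x) ` VV m b" and y: "y \<in> X"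
  shows "X = (if y \<in> U then coset W1 y else coset W2 y)"
proof -
  obtain z where z: "z \<in> VV m b" "X = (if z \<in> U then coset W1 z else coset W2 z)" using X by blast
  show ?thesis
  proof (cases "z \<in> U")
    case True
    then have y1: "y \<in> coset W1 z" using y z by simp
    then have "y \<in> U" using coset_subset[OF W(1,2) U True] by blast
    then show ?thesis using z True coset_eq[OF W(1) y1] by simp
  next
    case False
    then have y2: "y \<in> coset W2 z" using y z by simp
    have "y \<notin> U"
    proof
      assume "y \<in> U"
      moreover have "vadd y z \<in> U" using y2 coset_mem W(4) by blast
      ultimately have "vadd y (vadd y z) \<in> U" using subspace_closed[OF U] by blast
      then show False using False by simp
    qed
    then show ?thesis using z False coset_eq[OF W(3) y2] by simp
  qed
qed

lemma J_iff: "i \<in> J_set m b U \<longleftrightarrow> i < b \<and> \<not> blockV m i \<subseteq> U"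
  unfolding J_set_def by blast

lemma vecs_empty: "vecs {} = {vzero}" unfolding vecs_def vzero_def by auto

lemma proj_subspace:
  assumes W: "f2_subspace ({..<b} \<times> {..<m}) W"
  shows "f2_subspace {..<m} ((\<lambda>x. comp m x i) ` (W \<inter> blockV m i))"
  unfolding f2_subspace_def
proof (intro conjI ballI)
  show "(\<lambda>x. comp m x i) ` (W \<inter> blockV m i) \<subseteq> vecs {..<m}" using comp_in_vecs by blast
  have "vzero \<in> W \<inter> blockV m i" using W unfolding f2_subspace_def by simp
  then show "vzero \<in> (\<lambda>x. comp m x i) ` (W \<inter> blockV m i)" by (metis comp_zero image_eqI)
next
  fix x y assume "x \<in> (\<lambda>x. comp m x i) ` (W \<inter> blockV m i)" "y \<in> (\<lambda>x. comp m x i) ` (W \<inter> blockV m i)"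
  then obtain x' y' where "x' \<in> W \<inter> blockV m i" "y' \<in> W \<inter> blockV m i" "x = comp m x' i" "y = comp m y' i" by blast
  moreover then have "vadd x' y' \<in> W \<inter> blockV m i" using subspace_closed[OF W] vecs_vadd by blast
  ultimately show "vadd x y \<in> (\<lambda>x. comp m x i) ` (W \<inter> blockV m i)" by (metis comp_vadd image_eqI)
qed

lemma arith_out: assumes "(2::nat) ^ m \<le> 2 ^ r * (2 ^ d - 1)" "r < m" "d < m - (r - 1)" shows False
proof -
  have "(2::nat) ^ d - 1 < 2 ^ d" by simp
  then have "(2::nat) ^ r * (2 ^ d - 1) < 2 ^ r * 2 ^ d" by simp
  then have "(2::nat) ^ m < 2 ^ r * 2 ^ d" by (rule le_less_trans[OF assms(1)])
  then have "(2::nat) ^ m < 2 ^ (r + d)" by (simp add: power_add)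
  then have "m < r + d" by simp
  then show False using assms(2,3) by linarith
qed

lemma arith_in: assumes "(2::nat) ^ m \<le> 2 * (2 ^ r * (2 ^ d - 1))" "r < m - 1" "d < m - r" shows False
proof -
  have "(2::nat) ^ d - 1 < 2 ^ d" by simp
  then have "2 * ((2::nat) ^ r * (2 ^ d - 1)) < 2 * (2 ^ r * 2 ^ d)" by simp
  then have "(2::nat) ^ m < 2 * (2 ^ r * 2 ^ d)" by (rule le_less_trans[OF assms(1)])
  then have "(2::nat) ^ m < 2 ^ (Suc (r + d))" by (simp add: power_add)
  then have "m < Suc (r + d)" by (meson one_less_numeral_iff power_strict_increasing_iff semiring_norm(76))
  then show False using assms(2,3) by linarith
qed



locale st = pm +
  fixes U U' W1 W2 W1' W2' :: "(nat \<times> nat \<Rightarrow> bool) set"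
  assumes m: "m > 1" and b: "b > 1"
    and U: "f2_subspace ({..<b} \<times> {..<m}) U" "f2_dim U = m * b - 1"
    and U': "f2_subspace ({..<b} \<times> {..<m}) U'" "f2_dim U' = m * b - 1"
    and J: "J_set m b U \<inter> J_set m b U' = {}"
    and outside: "\<forall>i<b. i \<notin> J_set m b U \<union> J_set m b U' \<longrightarrow>
        (\<exists>r. r < m \<and> diff_uniform m (g i) (2 ^ r) \<and> strongly_anti_invariant m (g i) (r - 1))"
    and inside: "\<forall>j\<in>J_set m b U \<union> J_set m b U'.
        (\<exists>r. r < m - 1 \<and> diff_uniform m (g j) (2 ^ r) \<and> strongly_anti_invariant m (g j) r)"
    and W: "f2_subspace ({..<b} \<times> {..<m}) W1" "W1 \<subseteq> U"
           "f2_subspace ({..<b} \<times> {..<m}) W2" "W2 \<subseteq> U"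
    and W': "f2_subspace ({..<b} \<times> {..<m}) W1'" "W1' \<subseteq> U'"
           "f2_subspace ({..<b} \<times> {..<m}) W2'" "W2' \<subseteq> U'"
    and nontriv: "\<not> trivial_partition (VV m b) (LA m b U' W1' W2')"
    and maps: "maps_onto (par_map m b g) (LA m b U W1 W2) (LA m b U' W1' W2')"
begin

definition "blk x = (if x \<in> U then coset W1 x else coset W2 x)"
definition "blk' x = (if x \<in> U' then coset W1' x else coset W2' x)"

lemma mb: "m * b \<ge> 1" using m b by (simp add: Suc_leI)

lemma hU: "card U = 2 ^ (m * b - 1)" "\<exists>vb. vb \<in> VV m b \<and> vb \<notin> U"
    "\<forall>x\<in>VV m b - U. \<forall>y\<in>VV m b - U. vadd x y \<in> U"
  using hyper[OF U mb] by auto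

lemma hU': "card U' = 2 ^ (m * b - 1)" "\<exists>vb. vb \<in> VV m b \<and> vb \<notin> U'"
    "\<forall>x\<in>VV m b - U'. \<forall>y\<in>VV m b - U'. vadd x y \<in> U'"
  using hyper[OF U' mb] by auto

lemma UV: "U \<subseteq> VV m b" "U' \<subseteq> VV m b" using sub_VV U U' by auto

lemma LA1: "LA m b U W1 W2 = blk ` VV m b"
  unfolding blk_def by (rule LA_blk[OF U(1) hU(3) hU(2)])

lemma LA2: "LA m b U' W1' W2' = blk' ` VV m b"
  unfolding blk'_def by (rule LA_blk[OF U'(1) hU'(3) hU'(2)])

lemma E: assumes x: "x \<in> VV m b" shows "\<gamma> ` blk x = blk' (\<gamma> x)"
proof -
  have "(\<lambda>A. \<gamma> ` A) ` (blk ` VV m b) = blk' ` VV m b"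
    using maps unfolding maps_onto_def LA1 LA2 .
  then have "\<gamma> ` blk x \<in> blk' ` VV m b" using x by blast
  moreover have "\<gamma> x \<in> \<gamma> ` blk x"
  proof -
    have "x \<in> blk x" unfolding blk_def using coset_self W by auto
    then show ?thesis by blast
  qed
  ultimately show ?thesis using blk_unique[OF U'(1) W', of "\<gamma> ` blk x" "\<gamma> x"]
    unfolding blk'_def by blast
qed

lemma E1: assumes x: "x \<in> U" "\<gamma> x \<in> U'" and a: "a \<in> W1"
  shows "vadd (\<gamma> (vadd x a)) (\<gamma> x) \<in> W1'"
proof -
  have xV: "x \<in> VV m b" using x UV by blast
  have "vadd x a \<in> coset W1 x" using a by (simp add: coset_mem)
  then have "\<gamma> (vadd x a) \<in> \<gamma> ` blk x" using x unfolding blk_def by simp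
  then have "\<gamma> (vadd x a) \<in> coset W1' (\<gamma> x)" using E[OF xV] x unfolding blk'_def by simp
  then show ?thesis by (simp add: coset_mem)
qed

lemma stepA: "\<gamma> ` W1 = W1'"
proof -
  have "vzero \<in> U" "vzero \<in> U'" using U U' unfolding f2_subspace_def by auto
  then show ?thesis using E[of vzero] zero unfolding blk_def blk'_def by simp
qed

lemma JU_ne: "\<exists>i<b. \<not> blockV m i \<subseteq> U"
proof (rule ccontr)
  assume "\<not> (\<exists>i<b. \<not> blockV m i \<subseteq> U)"
  then have h: "\<forall>i<b. blockV m i \<subseteq> U" by blast
  have "VV m b \<subseteq> U"
  proof
    fix x assume x: "x \<in> VV m b"
    show "x \<in> U" by (rule restr_sum[OF U(1) x]) (use h restr_block x in blast)
  qed
  then show False using hU(2) by blast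
qed

lemma notUU: "\<gamma> ` U \<noteq> U'"
proof
  assume eq: "\<gamma> ` U = U'"
  obtain i where i: "i < b" "\<not> blockV m i \<subseteq> U" using JU_ne by blast
  then have "i \<in> J_set m b U" using J_iff by blast
  then have "i \<notin> J_set m b U'" using J by blast
  then have sub': "blockV m i \<subseteq> U'" using J_iff i by blast
  have "blockV m i \<subseteq> U"
  proof
    fix y assume y: "y \<in> blockV m i"
    then have "\<gamma> y \<in> U'" using par_block[OF i(1)] sub' by blast
    then obtain u where u: "u \<in> U" "\<gamma> y = \<gamma> u" using eq by blast
    have "y \<in> VV m b" using y blockV_sub[OF i(1)] by blast
    moreover have "u \<in> VV m b" using u(1) UV by blast
    ultimately have "y = u" using par_inj u(2) \<open>y \<in> VV m b\<close> by (meson inj_onD)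
    then show "y \<in> U" using u by simp
  qed
  then show False using i by blast
qed

lemma cardUU: "card (\<gamma> ` U) = card U'"
  using card_image[OF inj_on_subset[OF par_inj UV(1)]] hU(1) hU'(1) by simp

lemma finU: "finite U" "finite U'" using finite_subset[OF UV(1) card_VV(1)] finite_subset[OF UV(2) card_VV(1)] by auto

lemma ex1: "\<exists>x\<in>U. \<gamma> x \<notin> U'"
proof (rule ccontr)
  assume "\<not> (\<exists>x\<in>U. \<gamma> x \<notin> U')"
  then have "\<gamma> ` U \<subseteq> U'" by blast
  then have "\<gamma> ` U = U'" using card_subset_eq[OF finU(2)] cardUU by blast
  then show False using notUU by blast
qed

lemma ex2: "\<exists>x\<in>VV m b - U. \<gamma> x \<in> U'"
proof (rule ccontr)
  assume a: "\<not> (\<exists>x\<in>VV m b - U. \<gamma> x \<in> U')"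
  have "U' \<subseteq> \<gamma> ` U"
  proof
    fix y assume y: "y \<in> U'"
    then obtain x where x: "x \<in> VV m b" "y = \<gamma> x" using par_surj UV by blast
    then have "x \<in> U" using a y by blast
    then show "y \<in> \<gamma> ` U" using x by blast
  qed
  moreover have "finite (\<gamma> ` U)" using finU by simp
  ultimately have "U' = \<gamma> ` U" using card_subset_eq cardUU by metis
  then show False using notUU by simp
qed

lemma coset_single: "coset {vzero} x = {x}" unfolding coset_def by simp

lemma stepC: "W1 \<noteq> {vzero}"
proof
  assume w: "W1 = {vzero}"
  then have w1': "W1' = {vzero}" using stepA zero by auto
  obtain x where x: "x \<in> U" "\<gamma> x \<notin> U'" using ex1 by blast
  have xV: "x \<in> VV m b" using x UV by blast
  have "\<gamma> ` blk x = {\<gamma> x}" unfolding blk_def using x w by (simp add: coset_single)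
  then have "coset W2' (\<gamma> x) = {\<gamma> x}" using E[OF xV] x unfolding blk'_def by simp
  then have "card W2' = 1" using card_coset by (metis is_singletonI is_singleton_altdef)
  moreover have "vzero \<in> W2'" using W' unfolding f2_subspace_def by blast
  ultimately have w2': "W2' = {vzero}" by (metis card_1_singletonE singletonD)
  have "blk' y = {y}" for y unfolding blk'_def by (simp add: w1' w2' coset_single)
  then have "blk' = (\<lambda>x. {x})" by auto
  then have "LA m b U' W1' W2' = (\<lambda>x. {x}) ` VV m b" using LA2 by simp
  then have "trivial_partition (VV m b) (LA m b U' W1' W2')"
    unfolding trivial_partition_def by blast
  then show False using nontriv by blast
qed

end


context st begin

definition "Z i = {x \<in> blockV m i. x \<in> U \<and> \<gamma> x \<in> U'}"

lemma Z_sub: "Z i \<subseteq> blockV m i" "finite (Z i)"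
  unfolding Z_def using card_blockV(1) finite_subset by auto

lemma Z_out: assumes i: "i < b" "i \<notin> J_set m b U \<union> J_set m b U'" shows "Z i = blockV m i"
proof -
  have "blockV m i \<subseteq> U" "blockV m i \<subseteq> U'" using i J_iff by blast+
  then show ?thesis unfolding Z_def using par_block[OF i(1)] by blast
qed

lemma Z_in: assumes i: "i < b" "i \<in> J_set m b U \<union> J_set m b U'" shows "2 ^ m \<le> 2 * card (Z i)"
proof (cases "i \<in> J_set m b U")
  case True
  then have "i \<notin> J_set m b U'" using J by blast
  then have s': "blockV m i \<subseteq> U'" using J_iff i by blast
  have "\<forall>x\<in>blockV m i. \<gamma> x \<in> U'" using par_block_sub[OF i(1)] s' by blast
  then have "Z i = blockV m i \<inter> U" unfolding Z_def by blast
  moreover have "\<not> blockV m i \<subseteq> U" using True J_iff by blast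
  ultimately show ?thesis using half_block[OF U(1) hU(3) i(1)] by simp
next
  case False
  then have iJ': "i \<in> J_set m b U'" using i by blast
  have s: "blockV m i \<subseteq> U" using False J_iff i by blast
  have Zi: "Z i = {x \<in> blockV m i. \<gamma> x \<in> U'}" unfolding Z_def using s by blast
  have "\<gamma> ` Z i = blockV m i \<inter> U'"
  proof
    show "\<gamma> ` Z i \<subseteq> blockV m i \<inter> U'" unfolding Zi using par_block_sub[OF i(1)] by blast
    show "blockV m i \<inter> U' \<subseteq> \<gamma> ` Z i"
    proof
      fix y assume y: "y \<in> blockV m i \<inter> U'"
      then obtain x where "x \<in> blockV m i" "y = \<gamma> x" using par_block[OF i(1)] by (metis IntD1 imageE)
      then show "y \<in> \<gamma> ` Z i" unfolding Zi using y by blast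
    qed
  qed
  moreover have "inj_on \<gamma> (Z i)" using inj_on_subset[OF par_inj] Z_sub(1) blockV_sub[OF i(1)] by blast
  ultimately have "card (Z i) = card (blockV m i \<inter> U')" using card_image by fastforce
  moreover have "\<not> blockV m i \<subseteq> U'" using iJ' J_iff by blast
  ultimately show ?thesis using half_block[OF U'(1) hU'(3) i(1)] by simp
qed

lemma param: assumes i: "i < b"
  shows "\<exists>r s. diff_unif m (g i) = 2 ^ r \<and> strongly_anti_invariant m (g i) s \<and>
    ((i \<notin> J_set m b U \<union> J_set m b U' \<and> r < m \<and> s = r - 1) \<or>
     (i \<in> J_set m b U \<union> J_set m b U' \<and> r < m - 1 \<and> s = r))"
proof (cases "i \<in> J_set m b U \<union> J_set m b U'")
  case True
  then obtain r where "r < m - 1" "diff_uniform m (g i) (2 ^ r)" "strongly_anti_invariant m (g i) r"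
    using inside by blast
  then show ?thesis using True unfolding diff_uniform_def by blast
next
  case False
  then obtain r where "r < m" "diff_uniform m (g i) (2 ^ r)" "strongly_anti_invariant m (g i) (r - 1)"
    using outside i by blast
  then show ?thesis using False unfolding diff_uniform_def by blast
qed

lemma comp_nonzero: assumes i: "i < b" and a: "a \<in> blockV m i" "a \<noteq> vzero" shows "comp m a i \<noteq> vzero"
proof
  assume c: "comp m a i = vzero"
  have "a \<in> VV m b" "\<forall>j<b. j \<noteq> i \<longrightarrow> comp m a j = vzero" using a blockV_iff[OF i] by auto
  then have "a = vzero" using VV_ext[where x=a and y=vzero and m=m and b=b] c by auto
  then show False using a by simp
qed

lemma D_block: assumes i: "i < b" and x: "x \<in> blockV m i" and a: "a \<in> blockV m i"
  shows "vadd (\<gamma> (vadd x a)) (\<gamma> x) \<in> blockV m i"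
proof -
  have "vadd x a \<in> blockV m i" using vecs_vadd x a by blast
  then have "\<gamma> (vadd x a) \<in> blockV m i" "\<gamma> x \<in> blockV m i" using par_block[OF i] x by blast+
  then show ?thesis using vecs_vadd by blast
qed

lemma stepD: assumes i: "i < b" and a: "a \<in> W1" "a \<in> blockV m i" "a \<noteq> vzero"
  shows "blockV m i \<subseteq> W1"
proof -
  obtain r s where rs: "diff_unif m (g i) = 2 ^ r" "strongly_anti_invariant m (g i) s"
    "(i \<notin> J_set m b U \<union> J_set m b U' \<and> r < m \<and> s = r - 1) \<or>
     (i \<in> J_set m b U \<union> J_set m b U' \<and> r < m - 1 \<and> s = r)"
    using param[OF i] by (elim exE conjE) (rule that)
  have ca: "comp m a i \<noteq> vzero" using comp_nonzero[OF i a(2,3)] .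
  define A where "A = W1 \<inter> blockV m i"
  define A' where "A' = W1' \<inter> blockV m i"
  define pA where "pA = (\<lambda>x. comp m x i) ` A"
  define pA' where "pA' = (\<lambda>x. comp m x i) ` A'"
  have W1V: "W1 \<subseteq> VV m b" "W1' \<subseteq> VV m b" using sub_VV W W' by auto
  have gA: "\<gamma> ` A = A'" unfolding A_def A'_def
    using inj_on_image_Int[OF par_inj W1V(1) blockV_sub[OF i]] stepA par_block[OF i] by simp
  have gpA: "g i ` pA = pA'"
  proof -
    have "g i ` pA = (\<lambda>x. comp m (\<gamma> x) i) ` A" unfolding pA_def using comp_par[OF i] by (simp add: image_image)
    also have "\<dots> = pA'" unfolding pA'_def gA[symmetric] by (simp add: image_image)
    finally show ?thesis .
  qed
  have spA: "f2_subspace {..<m} pA" unfolding pA_def A_def by (rule proj_subspace[OF W(1)])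
  have spA': "f2_subspace {..<m} pA'" unfolding pA'_def A'_def by (rule proj_subspace[OF W'(1)])
  have finA': "finite A'" unfolding A'_def using card_blockV(1) by simp
  have cardpA': "card pA' = card A'" unfolding pA'_def
    by (rule card_image, rule inj_on_subset[OF comp_inj_block]) (simp add: A'_def)
  have finpA': "finite pA'" unfolding pA'_def using finA' by simp
  have dim: "card pA' = 2 ^ f2_dim pA'" by (rule card_dim[OF spA' finpA'])
  have zero_pA': "vzero \<in> pA'" using spA' unfolding f2_subspace_def by blast
  let ?f = "\<lambda>x. comp m (vadd (\<gamma> (vadd x a)) (\<gamma> x)) i"
  have vals: "\<forall>x\<in>Z i. ?f x \<in> pA' - {vzero}"
  proof
    fix x assume x: "x \<in> Z i"
    then have xU: "x \<in> U" "\<gamma> x \<in> U'" and xb: "x \<in> blockV m i" unfolding Z_def by auto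
    have "vadd (\<gamma> (vadd x a)) (\<gamma> x) \<in> A'" unfolding A'_def
      using E1[OF xU a(1)] D_block[OF i xb a(2)] by blast
    then have "?f x \<in> pA'" unfolding pA'_def by blast
    moreover have "?f x \<noteq> vzero" using D_nonzero[OF i ca] .
    ultimately show "?f x \<in> pA' - {vzero}" by blast
  qed
  have "card (Z i) \<le> 2 ^ r * card (pA' - {vzero})"
  proof (rule count_fibers[OF Z_sub(2) vals])
    show "finite (pA' - {vzero})" using finpA' by simp
    show "\<forall>c\<in>pA' - {vzero}. card {x \<in> Z i. ?f x = c} \<le> 2 ^ r"
      using fiber_bound[OF i ca Z_sub(1)] rs(1) by simp
  qed
  then have cZ: "card (Z i) \<le> 2 ^ r * (2 ^ f2_dim pA' - 1)"
    using dim zero_pA' finpA' by (simp add: card_Diff_singleton)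
  have "\<not> (f2_dim pA = f2_dim pA' \<and> f2_dim pA' < m - s)"
  proof
    assume h: "f2_dim pA = f2_dim pA' \<and> f2_dim pA' < m - s"
    show False
    proof (cases "i \<in> J_set m b U \<union> J_set m b U'")
      case True
      then have "r < m - 1" "s = r" using rs(3) by auto
      moreover have "2 ^ m \<le> 2 * card (Z i)" using Z_in[OF i True] .
      moreover have "2 * card (Z i) \<le> 2 * (2 ^ r * (2 ^ f2_dim pA' - 1))" using cZ by simp
      ultimately show False using arith_in[of m r "f2_dim pA'"] h by linarith
    next
      case False
      then have "r < m" "s = r - 1" using rs(3) by auto
      moreover have "card (Z i) = 2 ^ m" using Z_out[OF i False] card_blockV(2) by simp
      ultimately have "(2::nat) ^ m \<le> 2 ^ r * (2 ^ f2_dim pA' - 1)" "r < m" "f2_dim pA' < m - (r - 1)"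
        using cZ h by auto
      then show False by (rule arith_out)
    qed
  qed
  moreover have "(f2_dim pA = f2_dim pA' \<and> f2_dim pA' < m - s) \<or> (pA = vecs {..<m} \<and> pA' = vecs {..<m})"
    using rs(2)[unfolded strongly_anti_invariant_def, rule_format, OF spA spA' gpA] .
  ultimately have "pA = vecs {..<m}" by blast
  show "blockV m i \<subseteq> W1"
  proof
    fix y assume y: "y \<in> blockV m i"
    have "comp m y i \<in> pA" using \<open>pA = vecs {..<m}\<close> comp_in_vecs by simp
    then obtain x where x: "x \<in> A" "comp m x i = comp m y i" unfolding pA_def by (rule imageE) simp
    have xb: "x \<in> blockV m i" using x(1) unfolding A_def by simp
    have "x = y" by (rule inj_onD[OF comp_inj_block[of m i] _ xb y]) (simp add: x(2))
    then show "y \<in> W1" using x(1) unfolding A_def by simp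
  qed
qed

end


context st begin

definition "I1 = {i. i < b \<and> blockV m i \<subseteq> W1}"

lemma I1_sub: "I1 \<subseteq> {..<b}" unfolding I1_def by auto

lemma wall_sub: "vecs (I1 \<times> {..<m}) \<subseteq> W1"
proof
  fix x assume x: "x \<in> vecs (I1 \<times> {..<m})"
  have xV: "x \<in> VV m b" using x vecs_mono[of "I1 \<times> {..<m}" "{..<b} \<times> {..<m}"] I1_sub by blast
  show "x \<in> W1"
  proof (rule restr_sum[OF W(1) xV], intro allI impI)
    fix i assume i: "i < b"
    show "(\<lambda>(k,j). k = i \<and> x (k,j)) \<in> W1"
    proof (cases "i \<in> I1")
      case True then show ?thesis using restr_block[OF i xV] unfolding I1_def by blast
    next
      case False
      then have "(\<lambda>(k,j). k = i \<and> x (k,j)) = vzero" using x unfolding vecs_def vzero_def by (auto simp: fun_eq_iff)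
      then show ?thesis using W(1) unfolding f2_subspace_def by simp
    qed
  qed
qed

lemma W1A: "W1' \<inter> blockV m i = \<gamma> ` (W1 \<inter> blockV m i)" if i: "i < b"
  using inj_on_image_Int[OF par_inj sub_VV[OF W(1)] blockV_sub[OF i]] stepA par_block[OF i] by simp

lemma W1_sub: "W1 \<subseteq> vecs (I1 \<times> {..<m})"
proof
  fix w assume w: "w \<in> W1"
  have wV: "w \<in> VV m b" using w sub_VV[OF W(1)] by blast
  define wI where "wI = (\<lambda>(k,j). k \<in> I1 \<and> w (k,j))"
  have wIv: "wI \<in> vecs (I1 \<times> {..<m})" using wV unfolding wI_def vecs_def by auto
  define w' where "w' = vadd w wI"
  have w'W: "w' \<in> W1" unfolding w'_def using subspace_closed[OF W(1) w] wall_sub wIv by blast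
  have w'V: "w' \<in> VV m b" using w'W sub_VV[OF W(1)] by blast
  show "w \<in> vecs (I1 \<times> {..<m})"
  proof (cases "\<forall>i<b. comp m w' i = vzero")
    case True
    then have "w' = vzero" using VV_ext[where x=w' and y=vzero and m=m and b=b] w'V by simp
    then have "w = wI" unfolding w'_def by (simp add: vadd_eq_zero_iff)
    then show ?thesis using wIv by simp
  next
    case False
    then obtain i where i: "i < b" and ci: "comp m w' i \<noteq> vzero" by blast
    have "i \<notin> I1"
    proof
      assume "i \<in> I1"
      then have "comp m w' i = vzero" unfolding w'_def wI_def comp_def vadd_def vzero_def by (auto simp: fun_eq_iff)
      then show False using ci by simp
    qed
    then have nb: "\<not> blockV m i \<subseteq> W1" unfolding I1_def using i by blast
    have only0: "\<forall>a\<in>W1 \<inter> blockV m i. a = vzero" using stepD[OF i] nb by blast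
    obtain r s where rs: "diff_unif m (g i) = 2 ^ r" "strongly_anti_invariant m (g i) s"
      "(i \<notin> J_set m b U \<union> J_set m b U' \<and> r < m \<and> s = r - 1) \<or>
       (i \<in> J_set m b U \<union> J_set m b U' \<and> r < m - 1 \<and> s = r)"
      using param[OF i] by (elim exE conjE) (rule that)
    have big: "2 ^ r < card (Z i)"
    proof (cases "i \<in> J_set m b U \<union> J_set m b U'")
      case True
      then have r: "r < m - 1" using rs(3) by auto
      have "(2::nat) ^ Suc r < 2 ^ m" using r by (intro power_strict_increasing) auto
      moreover have "2 ^ m \<le> 2 * card (Z i)" using Z_in[OF i True] .
      ultimately show ?thesis by simp
    next
      case False
      then have r: "r < m" using rs(3) by auto
      have "(2::nat) ^ r < 2 ^ m" using r by (intro power_strict_increasing) auto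
      moreover have "card (Z i) = 2 ^ m" using Z_out[OF i False] card_blockV(2) by simp
      ultimately show ?thesis by simp
    qed
    let ?f = "\<lambda>x. comp m (vadd (\<gamma> (vadd x w')) (\<gamma> x)) i"
    have "\<exists>x\<in>Z i. \<exists>y\<in>Z i. ?f x \<noteq> ?f y"
    proof (rule ccontr)
      assume "\<not> (\<exists>x\<in>Z i. \<exists>y\<in>Z i. ?f x \<noteq> ?f y)"
      then have all: "\<forall>x\<in>Z i. \<forall>y\<in>Z i. ?f x = ?f y" by blast
      have "Z i \<noteq> {}" using big by auto
      then obtain x0 where x0: "x0 \<in> Z i" by blast
      have "{x \<in> Z i. ?f x = ?f x0} = Z i" using all x0 by blast
      then have "card (Z i) \<le> diff_unif m (g i)"
        using fiber_bound[OF i ci Z_sub(1), of "?f x0"] by simp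
      then show False using big rs(1) by simp
    qed
    then obtain x y where x: "x \<in> Z i" and y: "y \<in> Z i" and fxy: "?f x \<noteq> ?f y" by blast
    have xZ: "x \<in> U" "\<gamma> x \<in> U'" "x \<in> blockV m i" using x unfolding Z_def by auto
    have yZ: "y \<in> U" "\<gamma> y \<in> U'" "y \<in> blockV m i" using y unfolding Z_def by auto
    define e where "e = vadd (vadd (\<gamma> (vadd x w')) (\<gamma> x)) (vadd (\<gamma> (vadd y w')) (\<gamma> y))"
    have eW: "e \<in> W1'" unfolding e_def
      using subspace_closed[OF W'(1) E1[OF xZ(1,2) w'W] E1[OF yZ(1,2) w'W]] .
    have eV: "e \<in> VV m b" unfolding e_def using vecs_vadd par_VV by blast
    have ce: "comp m e j = vzero" if j: "j < b" "j \<noteq> i" for j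
    proof -
      have "comp m x j = vzero" "comp m y j = vzero" using xZ(3) yZ(3) blockV_iff[OF i] j by auto
      then show ?thesis unfolding e_def using comp_D[OF j(1)] comp_vadd by simp
    qed
    have eb: "e \<in> blockV m i" using blockV_iff[OF i] eV ce by blast
    have "comp m e i = vadd (?f x) (?f y)" unfolding e_def by (simp add: comp_vadd)
    then have "comp m e i \<noteq> vzero" using fxy by (simp add: vadd_eq_zero_iff)
    then have enz: "e \<noteq> vzero" by auto
    have "e \<in> \<gamma> ` (W1 \<inter> blockV m i)" using W1A[OF i] eW eb by blast
    then obtain a where a: "a \<in> W1 \<inter> blockV m i" "e = \<gamma> a" by blast
    then have "a = vzero" using only0 by blast
    then have "e = vzero" using a zero by simp
    then show ?thesis using enz by simp
  qed
qed

lemma W1_wall: "W1 = vecs (I1 \<times> {..<m})" using W1_sub wall_sub by blast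

lemma I1_ne: "I1 \<noteq> {}"
proof
  assume "I1 = {}"
  then have "W1 = {vzero}" using W1_wall vecs_empty by simp
  then show False using stepC by simp
qed

lemma I1_proper: "I1 \<noteq> {..<b}"
proof
  assume "I1 = {..<b}"
  then have "W1 = VV m b" using W1_wall by simp
  then show False using W(2) hU(2) by blast
qed

lemma isw: "is_wall m b W1"
  unfolding is_wall_def using I1_ne I1_proper I1_sub W1_wall by blast

lemma gW1: "x \<in> VV m b \<Longrightarrow> \<gamma> ` coset W1 x = coset W1 (\<gamma> x)"
  using wall_coset[OF I1_sub] W1_wall by simp

lemma W1'_eq: "W1' = W1"
  using stepA gW1[of vzero] zero by simp

lemma W2'_eq: "W2' = W1"
proof -
  obtain x where x: "x \<in> U" "\<gamma> x \<notin> U'" using ex1 by blast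
  have xV: "x \<in> VV m b" using x UV by blast
  have "coset W1 (\<gamma> x) = coset W2' (\<gamma> x)"
    using E[OF xV] gW1[OF xV] x unfolding blk_def blk'_def by simp
  then show ?thesis using coset_inj by metis
qed

lemma W2_eq: "W2 = W1"
proof -
  obtain x where x: "x \<in> VV m b - U" "\<gamma> x \<in> U'" using ex2 by blast
  have xV: "x \<in> VV m b" using x by blast
  have "\<gamma> ` coset W2 x = coset W1' (\<gamma> x)" using E[OF xV] x unfolding blk_def blk'_def by simp
  also have "\<dots> = \<gamma> ` coset W1 x" using gW1[OF xV] W1'_eq by simp
  finally have "coset W2 x = coset W1 x"
    using inj_on_image_eq_iff[OF par_inj coset_sub_VV[OF W(3) xV] coset_sub_VV[OF W(1) xV]] by blast
  then show ?thesis using coset_inj by metis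
qed

lemma lin: "LA m b U W1 W1 = lin_part m b W1" "LA m b U' W1 W1 = lin_part m b W1"
proof -
  have l: "lin_part m b W1 = (\<lambda>x. coset W1 x) ` VV m b" unfolding lin_part_def by blast
  show "LA m b U W1 W1 = lin_part m b W1" using LA_blk[OF U(1) hU(3) hU(2), of W1 W1] l by simp
  show "LA m b U' W1 W1 = lin_part m b W1" using LA_blk[OF U'(1) hU'(3) hU'(2), of W1 W1] l by simp
qed

theorem main: "is_wall m b W1 \<and> is_wall m b W2 \<and> is_wall m b W1' \<and> is_wall m b W2'
    \<and> W1 = W1' \<and> W1' = W2 \<and> W2 = W2'
    \<and> LA m b U W1 W2 = lin_part m b W1 \<and> LA m b U' W1' W2' = lin_part m b W1'"
  using isw W1'_eq W2'_eq W2_eq lin by simp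

end

theorem corollary3p13:
  fixes m b :: nat
    and g :: "nat \<Rightarrow> (nat \<Rightarrow> bool) \<Rightarrow> (nat \<Rightarrow> bool)"
    and U U' W1 W2 W1' W2' :: "(nat \<times> nat \<Rightarrow> bool) set"
  assumes m: "m > 1" and b: "b > 1"
    and perm: "\<forall>i<b. bij_betw (g i) (vecs {..<m}) (vecs {..<m})"
    and zero: "par_map m b g vzero = vzero"
    and U: "f2_subspace ({..<b} \<times> {..<m}) U" "f2_dim U = m * b - 1"
    and U': "f2_subspace ({..<b} \<times> {..<m}) U'" "f2_dim U' = m * b - 1"
    and J: "J_set m b U \<inter> J_set m b U' = {}"
    and outside: "\<forall>i<b. i \<notin> J_set m b U \<union> J_set m b U' \<longrightarrow>
        (\<exists>r. r < m \<and> diff_uniform m (g i) (2 ^ r) \<and> strongly_anti_invariant m (g i) (r - 1))"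
    and inside: "\<forall>j\<in>J_set m b U \<union> J_set m b U'.
        (\<exists>r. r < m - 1 \<and> diff_uniform m (g j) (2 ^ r) \<and> strongly_anti_invariant m (g j) r)"
    and W: "f2_subspace ({..<b} \<times> {..<m}) W1" "W1 \<subseteq> U"
           "f2_subspace ({..<b} \<times> {..<m}) W2" "W2 \<subseteq> U"
    and W': "f2_subspace ({..<b} \<times> {..<m}) W1'" "W1' \<subseteq> U'"
           "f2_subspace ({..<b} \<times> {..<m}) W2'" "W2' \<subseteq> U'"
    and nontriv: "\<not> trivial_partition (VV m b) (LA m b U' W1' W2')"
    and maps: "maps_onto (par_map m b g) (LA m b U W1 W2) (LA m b U' W1' W2')"
  shows "is_wall m b W1 \<and> is_wall m b W2 \<and> is_wall m b W1' \<and> is_wall m b W2'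
    \<and> W1 = W1' \<and> W1' = W2 \<and> W2 = W2'
    \<and> LA m b U W1 W2 = lin_part m b W1 \<and> LA m b U' W1' W2' = lin_part m b W1'"
proof -
  have "st m b g U U' W1 W2 W1' W2'"
    unfolding st_def st_axioms_def pm_def using assms by blast
  then show ?thesis by (rule st.main)
qed

end
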